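(* Let $n\ge1$ be an integer and let $k\in\mathbb{R}\setminus C_n$. Then there is a unique pair $(a,b)\in\mathbb{R}^2$ with $(a,b)\neq(0,0)$ satisfying both $S^{(a,b)}_{k,n+1}+S^{(a,b)}_{k,n}=bk+2b+a$ and $4a^3+27b^2=0$; namely $a=-\frac{27(P_n(k)-1)^2}{4(Q_n(k)-k-2)^2}$, $b=\frac{27(P_n(k)-1)^3}{4(Q_n(k)-k-2)^3}$.
   Context: For real $k,a,b$, the generalized $k$-FL sequence is $S^{(a,b)}_{k,0}=2b$, $S^{(a,b)}_{k,1}=bk+a$, $S^{(a,b)}_{k,m}=kS^{(a,b)}_{k,m-1}+S^{(a,b)}_{k,m-2}$ ($m\ge2$). Define $f_m,g_m\in\mathbb{Z}[T]$ by $f_0=0,f_1=1,g_0=2,g_1=T$, $f_m=Tf_{m-1}+f_{m-2}$, $g_m=Tg_{m-1}+g_{m-2}$, and set $P_n=f_{n+1}+f_n$, $Q_n=g_{n+1}+g_n$, so that $S^{(a,b)}_{k,n+1}+S^{(a,b)}_{k,n}=P_n(k)a+Q_n(k)b$. Let $C_n=\{k\in\mathbb{R}: P_n(k)-1=0 \text{ or } Q_n(k)-k-2=0\}$. *)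

theory Defs
  imports "HOL-Computational_Algebra.Polynomial"
begin

text \<open>Generalized k-FL sequence S^{(a,b)}_{k,m}, written FL k a b m.\<close>
fun FL :: "real \<Rightarrow> real \<Rightarrow> real \<Rightarrow> nat \<Rightarrow> real" where
  "FL k a b 0 = 2 * b"
| "FL k a b (Suc 0) = b * k + a"
| "FL k a b (Suc (Suc m)) = k * FL k a b (Suc m) + FL k a b m"

fun fpoly :: "nat \<Rightarrow> int poly" where
  "fpoly 0 = 0"
| "fpoly (Suc 0) = 1"
| "fpoly (Suc (Suc m)) = [:0, 1:] * fpoly (Suc m) + fpoly m"

fun gpoly :: "nat \<Rightarrow> int poly" where
  "gpoly 0 = [:2:]"
| "gpoly (Suc 0) = [:0, 1:]"
| "gpoly (Suc (Suc m)) = [:0, 1:] * gpoly (Suc m) + gpoly m"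

definition Ppoly :: "nat \<Rightarrow> int poly" where
  "Ppoly n = fpoly (n + 1) + fpoly n"

definition Qpoly :: "nat \<Rightarrow> int poly" where
  "Qpoly n = gpoly (n + 1) + gpoly n"

definition evalR :: "int poly \<Rightarrow> real \<Rightarrow> real" where
  "evalR p k = poly (map_poly of_int p) k"

definition Cset :: "nat \<Rightarrow> real set" where
  "Cset n = {k. evalR (Ppoly n) k - 1 = 0 \<or> evalR (Qpoly n) k - k - 2 = 0}"

end

theory Submission imports Defs begin
lemma mp_add: "map_poly (of_int::int\<Rightarrow>real) (p + q) = map_poly of_int p + map_poly of_int q"
  by (intro poly_eqI) (simp add: coeff_map_poly)
lemma ev_add: "evalR (p + q) k = evalR p k + evalR q k"
  unfolding evalR_def by (simp add: mp_add)
lemma ev_x: "evalR ([:0, 1:] * p) k = k * evalR p k"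
proof -
  have "[:0, 1:] * p = pCons 0 p" by simp
  then show ?thesis unfolding evalR_def by (simp add: map_poly_pCons)
qed
lemma ev_pC: "evalR (pCons 0 p) k = k * evalR p k"
  unfolding evalR_def by (simp add: map_poly_pCons)
lemma ev_f: "evalR (fpoly (Suc (Suc m))) k = k * evalR (fpoly (Suc m)) k + evalR (fpoly m) k"
  by (simp add: ev_add ev_pC)
lemma ev_g: "evalR (gpoly (Suc (Suc m))) k = k * evalR (gpoly (Suc m)) k + evalR (gpoly m) k"
  by (simp add: ev_add ev_pC)
lemma FL_eq: "FL k a b m = evalR (fpoly m) k * a + evalR (gpoly m) k * b"
proof (induction k a b m rule: FL.induct)
  case (1 k a b) then show ?case by (simp add: evalR_def map_poly_pCons)
next
  case (2 k a b) then show ?case by (simp add: evalR_def map_poly_pCons)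
next
  case (3 k a b m) then show ?case by (simp only: FL.simps ev_f ev_g) (simp add: algebra_simps)
qed
lemma FL_sum: "FL k a b (n+1) + FL k a b n = evalR (Ppoly n) k * a + evalR (Qpoly n) k * b"
  unfolding FL_eq Ppoly_def Qpoly_def ev_add
  by (simp add: algebra_simps)
lemma uniq_pq:
  fixes p q a b :: real
  assumes p0: "p \<noteq> 0" and q0: "q \<noteq> 0" and ne: "(a, b) \<noteq> (0, 0)"
    and lin: "p * a + q * b = 0" and cub: "4 * a ^ 3 + 27 * b ^ 2 = 0"
  shows "a = - (27 * p ^ 2) / (4 * q ^ 2) \<and> b = (27 * p ^ 3) / (4 * q ^ 3)"
proof -
  have pa: "p * a = - (q * b)" using lin by simp
  have ha: "a = - (q * b) / p" using pa p0 by (simp add: field_simps)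
  have bnz: "b \<noteq> 0" using ne ha by auto
  have "(p * a) ^ 3 = - (q ^ 3 * b ^ 3)" unfolding pa by (simp add: power_mult_distrib)
  then have "p ^ 3 * a ^ 3 = - (q ^ 3 * b ^ 3)" by (simp add: power_mult_distrib)
  moreover have "p ^ 3 * (4 * a ^ 3 + 27 * b ^ 2) = 0" using cub by simp
  moreover have "p ^ 3 * (4 * a ^ 3 + 27 * b ^ 2) = 4 * (p ^ 3 * a ^ 3) + 27 * p ^ 3 * b ^ 2"
    by (simp add: algebra_simps)
  moreover have "4 * (- (q ^ 3 * b ^ 3)) + 27 * p ^ 3 * b ^ 2 = b ^ 2 * (27 * p ^ 3 - 4 * q ^ 3 * b)"
    by (simp add: algebra_simps power2_eq_square power3_eq_cube)
  ultimately have "b ^ 2 * (27 * p ^ 3 - 4 * q ^ 3 * b) = 0" by metis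
  then have "27 * p ^ 3 - 4 * q ^ 3 * b = 0" using bnz by simp
  then have hb: "b = (27 * p ^ 3) / (4 * q ^ 3)" using q0 by (simp add: field_simps)
  have "a = - (27 * p ^ 2) / (4 * q ^ 2)" unfolding ha hb using p0 q0
    by (simp add: field_simps power2_eq_square power3_eq_cube)
  then show ?thesis using hb by simp
qed

theorem lemma3p7:
  fixes n :: nat and k :: real
  assumes "n \<ge> 1" and "k \<notin> Cset n"
  shows "(\<exists>!p :: real \<times> real. p \<noteq> (0, 0)
            \<and> FL k (fst p) (snd p) (n + 1) + FL k (fst p) (snd p) n
                = snd p * k + 2 * snd p + fst p
            \<and> 4 * fst p ^ 3 + 27 * snd p ^ 2 = 0)
       \<and> (let a = - (27 * (evalR (Ppoly n) k - 1) ^ 2) / (4 * (evalR (Qpoly n) k - k - 2) ^ 2);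
              b = (27 * (evalR (Ppoly n) k - 1) ^ 3) / (4 * (evalR (Qpoly n) k - k - 2) ^ 3)
          in (a, b) \<noteq> (0, 0)
             \<and> FL k a b (n + 1) + FL k a b n = b * k + 2 * b + a
             \<and> 4 * a ^ 3 + 27 * b ^ 2 = 0)"
proof -
  define P where "P = evalR (Ppoly n) k"
  define Q where "Q = evalR (Qpoly n) k"
  have p0: "P - 1 \<noteq> 0" and q0: "Q - k - 2 \<noteq> 0"
    using assms(2) unfolding Cset_def P_def Q_def by auto
  define p where "p = P - 1"
  define q where "q = Q - k - 2"
  have p0': "p \<noteq> 0" and q0': "q \<noteq> 0" using p0 q0 by (auto simp: p_def q_def)
  define a0 where "a0 = - (27 * (P - 1) ^ 2) / (4 * (Q - k - 2) ^ 2)"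
  define b0 where "b0 = (27 * (P - 1) ^ 3) / (4 * (Q - k - 2) ^ 3)"
  have eqv: "FL k a b (n + 1) + FL k a b n = b * k + 2 * b + a \<longleftrightarrow> (P - 1) * a + (Q - k - 2) * b = 0" for a b
    unfolding FL_sum P_def[symmetric] Q_def[symmetric] by (auto simp: algebra_simps)
  have b0nz: "b0 \<noteq> 0" using p0 q0 by (simp add: b0_def)
  have lin0: "(P - 1) * a0 + (Q - k - 2) * b0 = 0"
  proof -
    have "p * (- (27 * p ^ 2) / (4 * q ^ 2)) + q * ((27 * p ^ 3) / (4 * q ^ 3)) = 0"
      using q0' by (simp add: field_simps power2_eq_square power3_eq_cube)
    then show ?thesis unfolding a0_def b0_def p_def q_def .
  qed
  have cub0: "4 * a0 ^ 3 + 27 * b0 ^ 2 = 0"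
  proof -
    have "4 * (- (27 * p ^ 2) / (4 * q ^ 2)) ^ 3 + 27 * ((27 * p ^ 3) / (4 * q ^ 3)) ^ 2 = 0"
      using q0' by (simp add: field_simps power2_eq_square power3_eq_cube)
    then show ?thesis unfolding a0_def b0_def p_def q_def .
  qed
  have uniq: "a = a0 \<and> b = b0" if ne: "(a, b) \<noteq> (0, 0)" and lin: "(P - 1) * a + (Q - k - 2) * b = 0"
    and cub: "4 * a ^ 3 + 27 * b ^ 2 = 0" for a b
    using uniq_pq[OF p0 q0 ne lin cub] unfolding a0_def b0_def .
  show ?thesis
    unfolding P_def[symmetric] Q_def[symmetric] Let_def a0_def[symmetric] b0_def[symmetric]
  proof (intro conjI)
    show "\<exists>!p :: real \<times> real. p \<noteq> (0, 0)
            \<and> FL k (fst p) (snd p) (n + 1) + FL k (fst p) (snd p) n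
                = snd p * k + 2 * snd p + fst p
            \<and> 4 * fst p ^ 3 + 27 * snd p ^ 2 = 0"
    proof (rule ex1I[of _ "(a0, b0)"])
      show "(a0, b0) \<noteq> (0, 0) \<and> FL k (fst (a0, b0)) (snd (a0, b0)) (n + 1) + FL k (fst (a0, b0)) (snd (a0, b0)) n
                = snd (a0, b0) * k + 2 * snd (a0, b0) + fst (a0, b0) \<and> 4 * fst (a0, b0) ^ 3 + 27 * snd (a0, b0) ^ 2 = 0"
        using b0nz lin0 cub0 eqv by simp
    next
      fix p :: "real \<times> real"
      assume h: "p \<noteq> (0, 0) \<and> FL k (fst p) (snd p) (n + 1) + FL k (fst p) (snd p) n
                = snd p * k + 2 * snd p + fst p \<and> 4 * fst p ^ 3 + 27 * snd p ^ 2 = 0"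
      obtain a b where pab: "p = (a, b)" by (cases p)
      show "p = (a0, b0)" using uniq[of a b] h eqv unfolding pab by auto
    qed
    show "(a0, b0) \<noteq> (0, 0)" using b0nz by simp
    show "FL k a0 b0 (n + 1) + FL k a0 b0 n = b0 * k + 2 * b0 + a0" using eqv lin0 by simp
    show "4 * a0 ^ 3 + 27 * b0 ^ 2 = 0" by (rule cub0)
  qed
qed

end
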